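(* Let $\mathfrak G_{\mathbb N}$ be the infinite undirected graph with vertex set $\mathbb N$ and edges $\{a,a+1\}$ for all $a\in\mathbb N$. For all $a,b,c,d\in\mathbb N$, $$\mathfrak G_{\mathbb N}\models a:b::_P c:d\iff |a-b|=|c-d|.$$
   Context: For undirected graphs (edges are one- or two-element vertex sets, $uEv$ iff $\{u,v\}$ is an edge): path formulas $\pi_0(x,y):\equiv x=y$, $\pi_1(x,y):\equiv xEy$, $\pi_n(x,y):\equiv\exists z_1\ldots z_{n-1}(xEz_1\wedge\cdots\wedge z_{n-1}Ey)$ for $n\ge2$. Path type $\uparrow^P_{\mathfrak G}(a\to b)=\{\pi_n:\mathfrak G\models\pi_n(a,b)\}$; $\uparrow^P_{\mathfrak G}(a\to b:\cdot\, c\to d)=\uparrow^P_{\mathfrak G}(a\to b)\cap\uparrow^P_{\mathfrak G}(c\to d)$. A path formula is trivial iff it lies in $\uparrow^P_{\mathfrak G}(a\to b:\cdot\, c\to d)$ for all vertices $a,b,c,d$; $\emptyset_{\mathfrak G}$ is the set of these. $\mathfrak G\models a\to b:\cdot_P\, c\to d$ iff either $\uparrow^P_{\mathfrak G}(a\to b)\cup\uparrow^P_{\mathfrak G}(c\to d)$ consists only of trivial formulas, or $\uparrow^P_{\mathfrak G}(a\to b:\cdot\, c\to d)$ contains a non-trivial formula and for every vertex $d'$, $\emptyset_{\mathfrak G}\subsetneq\uparrow^P(a\to b:\cdot\, c\to d)\subseteq\uparrow^P(a\to b:\cdot\, c\to d')$ implies $\emptyset_{\mathfrak G}\subsetneq\uparrow^P(a\to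 b:\cdot\, c\to d')\subseteq\uparrow^P(a\to b:\cdot\, c\to d)$. $\mathfrak G\models a:b::_P c:d$ iff $\mathfrak G\models a\to b:\cdot_P\, c\to d$, $b\to a:\cdot_P\, d\to c$, $c\to d:\cdot_P\, a\to b$ and $d\to c:\cdot_P\, b\to a$. *)

theory Defs
  imports Main
begin

text \<open>An undirected graph on the vertex type 'a is given by a symmetric edge
relation E (uEv iff {u,v} is an edge). The path formula pi_n is identified with
its index n; walk E n x y means the graph satisfies pi_n(x,y).\<close>

fun walk :: "('a \<Rightarrow> 'a \<Rightarrow> bool) \<Rightarrow> nat \<Rightarrow> 'a \<Rightarrow> 'a \<Rightarrow> bool" where
  "walk E 0 x y = (x = y)"
| "walk E (Suc n) x y = (\<exists>z. E x z \<and> walk E n z y)"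

definition path_type :: "('a \<Rightarrow> 'a \<Rightarrow> bool) \<Rightarrow> 'a \<Rightarrow> 'a \<Rightarrow> nat set" where
  "path_type E a b = {n. walk E n a b}"

definition path_type2 :: "('a \<Rightarrow> 'a \<Rightarrow> bool) \<Rightarrow> 'a \<Rightarrow> 'a \<Rightarrow> 'a \<Rightarrow> 'a \<Rightarrow> nat set" where
  "path_type2 E a b c d = path_type E a b \<inter> path_type E c d"

definition trivial_formulas :: "('a \<Rightarrow> 'a \<Rightarrow> bool) \<Rightarrow> nat set" where
  "trivial_formulas E = {n. \<forall>a b c d. n \<in> path_type2 E a b c d}"

definition arrow_prop :: "('a \<Rightarrow> 'a \<Rightarrow> bool) \<Rightarrow> 'a \<Rightarrow> 'a \<Rightarrow> 'a \<Rightarrow> 'a \<Rightarrow> bool" where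
  "arrow_prop E a b c d \<longleftrightarrow>
     (path_type E a b \<union> path_type E c d \<subseteq> trivial_formulas E)
   \<or> ((\<exists>n \<in> path_type2 E a b c d. n \<notin> trivial_formulas E) \<and>
      (\<forall>d'. (trivial_formulas E \<subset> path_type2 E a b c d \<and>
              path_type2 E a b c d \<subseteq> path_type2 E a b c d')
          \<longrightarrow> (trivial_formulas E \<subset> path_type2 E a b c d' \<and>
              path_type2 E a b c d' \<subseteq> path_type2 E a b c d)))"

definition analogy :: "('a \<Rightarrow> 'a \<Rightarrow> bool) \<Rightarrow> 'a \<Rightarrow> 'a \<Rightarrow> 'a \<Rightarrow> 'a \<Rightarrow> bool" where
  "analogy E a b c d \<longleftrightarrow> arrow_prop E a b c d \<and> arrow_prop E b a d c
     \<and> arrow_prop E c d a b \<and> arrow_prop E d c b a"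

definition nat_line :: "nat \<Rightarrow> nat \<Rightarrow> bool" where
  "nat_line u v \<longleftrightarrow> v = u + 1 \<or> u = v + 1"

end

theory Submission
  imports Defs
begin

definition dst :: "nat \<Rightarrow> nat \<Rightarrow> nat" where
  "dst a b = (if a \<le> b then b - a else a - b)"
definition TT :: "nat \<Rightarrow> nat set" where
  "TT k = {n. \<exists>j. n = k + 2*j}"
lemma adj: "(z = a+1 \<or> a = z+1) \<Longrightarrow> dst a b = dst z b + 1 \<or> dst a b + 1 = dst z b"
  unfolding dst_def by auto
lemma l1: "(z = a+1 \<or> a = z+1) \<Longrightarrow> n = dst z b + 2*j \<Longrightarrow> \<exists>j'. Suc n = dst a b + 2*j'"
proof -
  assume h: "z = a+1 \<or> a = z+1" "n = dst z b + 2*j"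
  show ?thesis
  proof (cases "dst a b = dst z b + 1")
    case True then show ?thesis using h(2) by (intro exI[of _ j]) simp
  next
    case False then have "dst a b + 1 = dst z b" using adj[OF h(1)] by blast
    then show ?thesis using h(2) by (intro exI[of _ "j+1"]) simp
  qed
qed
lemma TT_ne: "k \<in> TT k" unfolding TT_def by auto
lemma TT_up: "k \<le> m \<Longrightarrow> even (k+m) \<Longrightarrow> TT m \<subseteq> TT k"
proof
  fix n assume "k \<le> m" "even (k+m)" "n \<in> TT m"
  from \<open>even (k+m)\<close> obtain t where t: "k+m = 2*t" by blast
  from \<open>n \<in> TT m\<close> obtain j where "n = m + 2*j" unfolding TT_def by blast
  note t this
  then have "n = k + 2*(t - k + j)" using \<open>k \<le> m\<close> by simp
  then show "n \<in> TT k" unfolding TT_def by blast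
qed
lemma TT_par: "n \<in> TT k \<Longrightarrow> n \<in> TT m \<Longrightarrow> even (k+m)"
proof -
  assume "n \<in> TT k" "n \<in> TT m"
  then obtain i j where e: "n = k + 2*i" "n = m + 2*j" unfolding TT_def by blast
  then have "k + m + 2*i = 2*(m+j)" by simp
  then have "even (k + m + 2*i)" by (metis dvd_triv_left)
  then show "even (k+m)" by (simp only: even_add[of "k+m" "2*i"]) simp
qed

lemma TT_ge: "n \<in> TT k \<Longrightarrow> k \<le> n" unfolding TT_def by auto

lemma l2: "Suc n = dst a b + 2*j \<Longrightarrow> \<exists>z. (z = a+1 \<or> a = z+1) \<and> (\<exists>j'. n = dst z b + 2*j')"
proof -
  assume h: "Suc n = dst a b + 2*j"
  consider "a < b" | "b < a" | "a = b" by linarith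
  then show ?thesis
  proof cases
    case 1
    then have "dst (a+1) b + 1 = dst a b" by (simp add: dst_def)
    then have "n = dst (a+1) b + 2*j" using h by simp
    then show ?thesis by blast
  next
    case 2
    define a' where "a' = a - 1"
    have a': "a = a' + 1" using 2 by (simp add: a'_def)
    have e1: "dst a b = a - b" using 2 by (simp add: dst_def)
    have e2: "dst a' b = a' - b" using 2 a' by (auto simp: dst_def)
    have "dst a' b + 1 = dst a b" unfolding e1 e2 using 2 a' by linarith
    then have "n = dst a' b + 2*j" using h by simp
    then show ?thesis using a' by blast
  next
    case 3
    then have "dst a b = 0" "dst (a+1) b = 1" by (simp_all add: dst_def)
    with h have "j \<ge> 1" "n = dst (a+1) b + 2*(j - 1)" by auto
    then show ?thesis by (intro exI[of _ "a+1"]) auto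
  qed
qed

lemma TT_mem: "n \<in> TT k \<longleftrightarrow> (\<exists>j. n = k + 2*j)" by (simp add: TT_def)

lemma walk_char: "walk nat_line n a b \<longleftrightarrow> n \<in> TT (dst a b)"
proof (induction n arbitrary: a)
  case 0
  have "0 \<in> TT k \<longleftrightarrow> k = 0" for k by (simp add: TT_def)
  moreover have "dst a b = 0 \<longleftrightarrow> a = b" by (auto simp: dst_def)
  ultimately show ?case by simp
next
  case (Suc n)
  show ?case
  proof
    assume "walk nat_line (Suc n) a b"
    then have "\<exists>z. nat_line a z \<and> walk nat_line n z b" by simp
    then obtain z where z: "nat_line a z" "walk nat_line n z b" by blast
    have "n \<in> TT (dst z b)" using z(2) Suc.IH[of z] by simp
    then obtain j where "n = dst z b + 2*j" unfolding TT_mem by blast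
    then obtain j' where "Suc n = dst a b + 2*j'" using l1[of z a n b j] z(1) unfolding nat_line_def by blast
    then show "Suc n \<in> TT (dst a b)" unfolding TT_mem by blast
  next
    assume "Suc n \<in> TT (dst a b)"
    then obtain j where "Suc n = dst a b + 2*j" unfolding TT_mem by blast
    then obtain z where zz: "z = a+1 \<or> a = z+1" "\<exists>j'. n = dst z b + 2*j'" using l2[of n a b j] by blast
    have "n \<in> TT (dst z b)" using zz(2) unfolding TT_mem .
    then have "walk nat_line n z b" using Suc.IH[of z] by simp
    moreover have "nat_line a z" using zz(1) unfolding nat_line_def by auto
    ultimately show "walk nat_line (Suc n) a b" unfolding walk.simps by blast
  qed
qed

lemma pt: "path_type nat_line a b = TT (dst a b)"
  unfolding path_type_def using walk_char by auto

lemma triv: "trivial_formulas nat_line = {}"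
proof -
  have "n \<notin> trivial_formulas nat_line" for n
  proof
    assume "n \<in> trivial_formulas nat_line"
    then have "n \<in> path_type nat_line 0 (n+1)"
      unfolding trivial_formulas_def path_type2_def by blast
    then have "n \<in> TT (n+1)" by (simp add: pt dst_def)
    then show False using TT_ge by fastforce
  qed
  then show ?thesis by auto
qed

lemma TT_int: "TT k \<inter> TT m = (if even (k+m) then TT (max k m) else {})"
proof (cases "even (k+m)")
  case True
  then show ?thesis
  proof (cases "k \<le> m")
    case True
    then show ?thesis using TT_up[OF True] \<open>even (k+m)\<close> by (auto simp: max_def)
  next
    case False
    then have "TT k \<subseteq> TT m" using TT_up[of m k] \<open>even (k+m)\<close> by (simp add: add.commute)
    then show ?thesis using False \<open>even (k+m)\<close> by (auto simp: max_def)
  qed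
next
  case False
  then show ?thesis using TT_par by auto
qed

lemma TT_sub: "TT k \<subseteq> TT j \<longleftrightarrow> j \<le> k \<and> even (k + j)"
proof
  assume "TT k \<subseteq> TT j"
  then have "k \<in> TT j" using TT_ne by blast
  then show "j \<le> k \<and> even (k + j)" using TT_ge TT_par[OF TT_ne] by blast
next
  assume "j \<le> k \<and> even (k + j)"
  then show "TT k \<subseteq> TT j" using TT_up[of j k] by (simp add: add.commute)
qed

lemma dst_surj: "dst c (c + m) = m" by (simp add: dst_def)

lemma arrow_char: "arrow_prop nat_line a b c d \<longleftrightarrow> dst c d \<le> dst a b \<and> even (dst a b + dst c d)"
proof -
  define k where "k = dst a b"
  define m where "m = dst c d"
  have X: "path_type2 nat_line a b c d = TT k \<inter> TT m"
    by (simp add: path_type2_def pt k_def m_def)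
  have X': "\<And>d'. path_type2 nat_line a b c d' = TT k \<inter> TT (dst c d')"
    by (simp add: path_type2_def pt k_def)
  have U: "\<not> (path_type nat_line a b \<union> path_type nat_line c d \<subseteq> {})"
    using TT_ne by (auto simp: pt)
  show ?thesis
  proof
    assume A: "arrow_prop nat_line a b c d"
    have A': "(path_type nat_line a b \<union> path_type nat_line c d \<subseteq> {}) \<or> ((\<exists>n \<in> TT k \<inter> TT m. n \<notin> {}) \<and> (\<forall>d'. ({} \<subset> TT k \<inter> TT m \<and> TT k \<inter> TT m \<subseteq> TT k \<inter> TT (dst c d'))
          \<longrightarrow> ({} \<subset> TT k \<inter> TT (dst c d') \<and> TT k \<inter> TT (dst c d') \<subseteq> TT k \<inter> TT m)))"
      using A unfolding arrow_prop_def triv X' m_def[symmetric] .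
    then have B: "(\<exists>n \<in> TT k \<inter> TT m. n \<notin> {}) \<and> (\<forall>d'. ({} \<subset> TT k \<inter> TT m \<and> TT k \<inter> TT m \<subseteq> TT k \<inter> TT (dst c d'))
          \<longrightarrow> ({} \<subset> TT k \<inter> TT (dst c d') \<and> TT k \<inter> TT (dst c d') \<subseteq> TT k \<inter> TT m))"
      using U by (meson disjE)
    then have ev: "even (k+m)" using TT_int[of k m] by (auto split: if_splits)
    from B have all: "\<forall>d'. ({} \<subset> TT k \<inter> TT m \<and> TT k \<inter> TT m \<subseteq> TT k \<inter> TT (dst c d'))
          \<longrightarrow> ({} \<subset> TT k \<inter> TT (dst c d') \<and> TT k \<inter> TT (dst c d') \<subseteq> TT k \<inter> TT m)" by blast
    have "m \<le> k"
    proof (rule ccontr)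
      assume nm: "\<not> m \<le> k"
      have e1: "TT k \<inter> TT (dst c (c+k)) = TT k" by (simp add: dst_surj TT_int)
      have e2: "TT k \<inter> TT m = TT m" using ev nm by (simp add: TT_int max_def)
      have "TT m \<subseteq> TT k" using TT_sub[of m k] nm ev by (simp add: add.commute)
      then have "TT k \<subseteq> TT m" using all[rule_format, of "c+k"] TT_ne[of m] unfolding e1 e2 by blast
      then show False using TT_sub[of k m] nm by simp
    qed
    then show "dst c d \<le> dst a b \<and> even (dst a b + dst c d)" using ev k_def m_def by simp
  next
    assume h: "dst c d \<le> dst a b \<and> even (dst a b + dst c d)"
    then have mk: "m \<le> k" "even (k+m)" using k_def m_def by auto
    have XX: "TT k \<inter> TT m = TT k" using mk by (simp add: TT_int max_def)
    show "arrow_prop nat_line a b c d"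
      unfolding arrow_prop_def triv X' m_def[symmetric] XX
      apply (rule disjI2) using TT_ne by blast
  qed
qed

theorem theorem18:
  fixes a b c d :: nat
  shows "analogy nat_line a b c d \<longleftrightarrow> \<bar>int a - int b\<bar> = \<bar>int c - int d\<bar>"
proof -
  have s: "dst x y = dst y x" for x y by (simp add: dst_def)
  have i: "int (dst x y) = \<bar>int x - int y\<bar>" for x y by (simp add: dst_def)
  have "analogy nat_line a b c d \<longleftrightarrow> dst a b = dst c d"
    unfolding analogy_def arrow_char by (auto simp: s)
  also have "\<dots> \<longleftrightarrow> \<bar>int a - int b\<bar> = \<bar>int c - int d\<bar>"
    by (metis i of_nat_eq_iff)
  finally show ?thesis .
qed

end
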